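(* Let $\Pi$ be the node-edge-checkable problem encoding $(\text{edge-degree}+1)$-edge coloring defined below, and $\Pi^*$ its node-list variant. Then for every valid input instance $(S,h_{\mathrm{in}})$ of $\Pi^*$ (on any finite semi-graph $S$), $\Pi^*$ admits a valid solution.
   Context: Semi-graph: a bipartite graph $S=(A\sqcup B,C)$ with every $b\in B$ of degree at most $2$; $A$ = nodes, $B$ = edges, $C$ = half-edges (incident node–edge pairs); degree of a node / rank of an edge = its degree in $S$. Node-edge-checkable problem $\Pi=(\Sigma,\mathcal N_\Pi,\mathcal E_\Pi)$: $\mathcal N_\Pi^i$ ($i\ge 0$) and $\mathcal E_\Pi^i$ ($i\in\{0,1,2\}$) are collections of cardinality-$i$ multisets over $\Sigma$. The problem $\Pi$: $\Sigma=\{(x,y): x,y\in\mathbb Z_{>0}\}\cup\{D\}$. For each $i\ge0$, $\mathcal N_\Pi^i$ consists of all cardinality-$i$ multisets of the form $\{(a_1,b_1),\dots,(a_p,b_p),D,\dots,D\}$ (with $i-p$ copies of $D$, $0\le p\le i$) such that $a_k\le p$ for all $k\le p$ and $b_l\ne b_m$ for all $l\ne m$. $\mathcal E_\Pi^0=\{\emptyset\}$, $\mathcal E_\Pi^1=\{\{D\}\}$, $\mathcal E_\Pi^2=\{\{(a_1,b),(a_2,b)\}: a_1,a_2,b\in\mathbb Z_{>0},\ a_1+a_2\ge b+1\}$. Node-list variant $\Pi^*$: for $i,j\ge0$ and $\psi\in\mathcal N_\Pi^j$, $\mathcal N^i_{\Pi,\psi}$ is the set of cardinality-$i$ multisets $\chi$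 over $\Sigma$ with $\chi\uplus\psi\in\mathcal N_\Pi^{i+j}$, and $\mathcal L^i=\{\mathcal N^i_{\Pi,\psi}:\psi\in\mathcal N_\Pi^j\text{ for some }j\ge0\}$. A valid input instance is $(S,h_{\mathrm{in}})$ with $h_{\mathrm{in}}(v)\in\mathcal L^{\deg(v)}$ for each node $v$. A valid solution is $h_{\mathrm{out}}:H(S)\to\Sigma$ such that for each node $v$ the multiset of labels on its incident half-edges lies in $h_{\mathrm{in}}(v)$, and for each edge $e$ the multiset of labels on its incident half-edges lies in $\mathcal E_\Pi^{\mathrm{rank}(e)}$. *)

theory Defs
  imports Main "HOL-Library.Multiset"
begin

datatype sigma = Pr nat nat | D

definition in_Sigma :: "sigma \<Rightarrow> bool" where
  "in_Sigma s = (case s of Pr x y \<Rightarrow> x > 0 \<and> y > 0 | D \<Rightarrow> True)"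

definition mset_over_Sigma :: "sigma multiset \<Rightarrow> bool" where
  "mset_over_Sigma M = (\<forall>s\<in>#M. in_Sigma s)"

definition node_constr :: "nat \<Rightarrow> sigma multiset set" where
  "node_constr i = {M. \<exists>xs :: (nat \<times> nat) list.
      length xs \<le> i \<and>
      M = mset (map (\<lambda>(a,b). Pr a b) xs) + replicate_mset (i - length xs) D \<and>
      (\<forall>(a,b)\<in>set xs. 0 < a \<and> 0 < b) \<and>
      (\<forall>(a,b)\<in>set xs. a \<le> length xs) \<and>
      distinct (map snd xs)}"

definition edge_constr :: "nat \<Rightarrow> sigma multiset set" where
  "edge_constr i =
     (if i = 0 then {{#}}
      else if i = 1 then {{#D#}}
      else if i = 2 then {{#Pr a1 b, Pr a2 b#} | a1 a2 b.
                           0 < a1 \<and> 0 < a2 \<and> 0 < b \<and> a1 + a2 \<ge> b + 1}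
      else {})"

definition list_constr :: "nat \<Rightarrow> sigma multiset \<Rightarrow> sigma multiset set" where
  "list_constr i \<psi> = {\<chi>. size \<chi> = i \<and> mset_over_Sigma \<chi> \<and>
                          \<chi> + \<psi> \<in> node_constr (i + size \<psi>)}"

definition list_family :: "nat \<Rightarrow> sigma multiset set set" where
  "list_family i = {list_constr i \<psi> | \<psi> j. \<psi> \<in> node_constr j}"

text \<open>Semi-graphs: nodes A, edges B, half-edges C \<subseteq> A \<times> B; edges have degree \<le> 2.\<close>
definition semi_graph :: "'a set \<Rightarrow> 'b set \<Rightarrow> ('a \<times> 'b) set \<Rightarrow> bool" where
  "semi_graph A B C = (finite A \<and> finite B \<and> C \<subseteq> A \<times> B \<and>
                       (\<forall>e\<in>B. card {v. (v,e) \<in> C} \<le> 2))"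

definition node_deg :: "('a \<times> 'b) set \<Rightarrow> 'a \<Rightarrow> nat" where
  "node_deg C v = card {e. (v,e) \<in> C}"

definition edge_rank :: "('a \<times> 'b) set \<Rightarrow> 'b \<Rightarrow> nat" where
  "edge_rank C e = card {v. (v,e) \<in> C}"

definition node_labels :: "('a \<times> 'b) set \<Rightarrow> ('a \<times> 'b \<Rightarrow> sigma) \<Rightarrow> 'a \<Rightarrow> sigma multiset" where
  "node_labels C h v = image_mset (\<lambda>e. h (v,e)) (mset_set {e. (v,e) \<in> C})"

definition edge_labels :: "('a \<times> 'b) set \<Rightarrow> ('a \<times> 'b \<Rightarrow> sigma) \<Rightarrow> 'b \<Rightarrow> sigma multiset" where
  "edge_labels C h e = image_mset (\<lambda>v. h (v,e)) (mset_set {v. (v,e) \<in> C})"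

definition valid_input :: "'a set \<Rightarrow> 'b set \<Rightarrow> ('a \<times> 'b) set \<Rightarrow> ('a \<Rightarrow> sigma multiset set) \<Rightarrow> bool" where
  "valid_input A B C hin = (\<forall>v\<in>A. hin v \<in> list_family (node_deg C v))"

definition valid_solution :: "'a set \<Rightarrow> 'b set \<Rightarrow> ('a \<times> 'b) set \<Rightarrow> ('a \<Rightarrow> sigma multiset set)
                               \<Rightarrow> ('a \<times> 'b \<Rightarrow> sigma) \<Rightarrow> bool" where
  "valid_solution A B C hin hout =
     ((\<forall>c\<in>C. in_Sigma (hout c)) \<and>
      (\<forall>v\<in>A. node_labels C hout v \<in> hin v) \<and>
      (\<forall>e\<in>B. edge_labels C hout e \<in> edge_constr (edge_rank C e)))"

end

theory Submission
  imports Defs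
begin

definition I2 :: "('a \<times> 'b) set \<Rightarrow> 'a \<Rightarrow> 'b set" where
  "I2 C w = {e. (w,e) \<in> C \<and> edge_rank C e = 2}"

definition pp :: "('a \<times> 'b) set \<Rightarrow> ('a \<Rightarrow> nat) \<Rightarrow> 'a \<Rightarrow> nat" where
  "pp C q w = q w + card (I2 C w)"

lemma finite_I2: "finite C \<Longrightarrow> finite (I2 C w)"
proof -
  assume "finite C"
  have "I2 C w \<subseteq> snd ` C" unfolding I2_def by force
  thus ?thesis using \<open>finite C\<close> finite_subset by blast
qed

lemma greedy:
  fixes C :: "('a \<times> 'b) set" and \<Psi> :: "'a \<Rightarrow> nat set" and q :: "'a \<Rightarrow> nat"
  assumes fin: "finite C"
    and cardP: "\<And>v. card (\<Psi> v) \<le> q v" and finP: "\<And>v. finite (\<Psi> v)"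
  shows "finite F \<Longrightarrow> (\<forall>e\<in>F. edge_rank C e = 2) \<Longrightarrow>
    \<exists>col. \<forall>e\<in>F. 1 \<le> col e \<and>
       (\<forall>u v. (u,e) \<in> C \<longrightarrow> (v,e) \<in> C \<longrightarrow> u \<noteq> v \<longrightarrow> col e < pp C q u + pp C q v) \<and>
       (\<forall>w. (w,e) \<in> C \<longrightarrow> col e \<notin> \<Psi> w) \<and>
       (\<forall>e'\<in>F. \<forall>w. e' \<noteq> e \<longrightarrow> (w,e) \<in> C \<longrightarrow> (w,e') \<in> C \<longrightarrow> col e \<noteq> col e')"
proof (induction F rule: finite_induct)
  case empty
  then show ?case by simp
next
  case (insert e F)
  from insert.prems have rF: "\<forall>e\<in>F. edge_rank C e = 2" by simp
  from insert.IH[OF rF] obtain col where col: "\<forall>e\<in>F. 1 \<le> col e \<and>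
       (\<forall>u v. (u,e) \<in> C \<longrightarrow> (v,e) \<in> C \<longrightarrow> u \<noteq> v \<longrightarrow> col e < pp C q u + pp C q v) \<and>
       (\<forall>w. (w,e) \<in> C \<longrightarrow> col e \<notin> \<Psi> w) \<and>
       (\<forall>e'\<in>F. \<forall>w. e' \<noteq> e \<longrightarrow> (w,e) \<in> C \<longrightarrow> (w,e') \<in> C \<longrightarrow> col e \<noteq> col e')" by blast
  from insert.prems have "card {v. (v,e) \<in> C} = 2" by (simp add: edge_rank_def)
  then obtain u v where uv: "u \<noteq> v" "{x. (x,e) \<in> C} = {u,v}" by (meson card_2_iff)
  have uC: "(u,e) \<in> C" and vC: "(v,e) \<in> C" using uv by blast+
  have eu: "e \<in> I2 C u" and ev: "e \<in> I2 C v" using uC vC insert.prems by (auto simp: I2_def)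
  define Fb where "Fb = \<Psi> u \<union> \<Psi> v \<union> col ` (F \<inter> I2 C u) \<union> col ` (F \<inter> I2 C v)"
  have fI: "finite (I2 C u)" "finite (I2 C v)" using finite_I2[OF fin] by auto
  have c1: "card (F \<inter> I2 C u) \<le> card (I2 C u) - 1"
  proof -
    have "F \<inter> I2 C u \<subseteq> I2 C u - {e}" using insert.hyps(2) by blast
    hence "card (F \<inter> I2 C u) \<le> card (I2 C u - {e})" using fI card_mono by blast
    thus ?thesis using eu fI by simp
  qed
  have c2: "card (F \<inter> I2 C v) \<le> card (I2 C v) - 1"
  proof -
    have "F \<inter> I2 C v \<subseteq> I2 C v - {e}" using insert.hyps(2) by blast
    hence "card (F \<inter> I2 C v) \<le> card (I2 C v - {e})" using fI card_mono by blast
    thus ?thesis using ev fI by simp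
  qed
  have pos: "card (I2 C u) \<ge> 1" "card (I2 C v) \<ge> 1"
    using eu ev fI by (metis One_nat_def Suc_leI card_gt_0_iff empty_iff)+
  have finFb: "finite Fb" unfolding Fb_def using finP insert.hyps(1) by auto
  have "card Fb \<le> card (\<Psi> u) + card (\<Psi> v) + card (col ` (F \<inter> I2 C u)) + card (col ` (F \<inter> I2 C v))"
    unfolding Fb_def by (meson card_Un_le le_trans add_mono order_refl)
  also have "\<dots> \<le> q u + q v + (card (I2 C u) - 1) + (card (I2 C v) - 1)"
    using cardP[of u] cardP[of v] card_image_le[of "F \<inter> I2 C u" col] card_image_le[of "F \<inter> I2 C v" col]
      c1 c2 insert.hyps(1) by simp
  finally have cFb: "card Fb < pp C q u + pp C q v - 1" using pos unfolding pp_def by linarith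
  define S where "S = {1..<pp C q u + pp C q v}"
  have "card S = pp C q u + pp C q v - 1" unfolding S_def by simp
  hence "card (S - Fb) > 0" using cFb diff_card_le_card_Diff[OF finFb, of S] by linarith
  then obtain c where c: "c \<in> S" "c \<notin> Fb" by (metis DiffE all_not_in_conv card.empty less_irrefl)
  define col' where "col' = col(e := c)"
  show ?case
  proof (rule exI[of _ col'], intro ballI conjI allI impI)
    fix e1 assume e1: "e1 \<in> insert e F"
    show "1 \<le> col' e1" using e1 col c S_def col'_def by (auto split: if_splits)
  next
    fix e1 u1 v1 assume e1: "e1 \<in> insert e F" and h: "(u1,e1) \<in> C" "(v1,e1) \<in> C" "u1 \<noteq> v1"
    show "col' e1 < pp C q u1 + pp C q v1"
    proof (cases "e1 = e")
      case True
      have "u1 \<in> {x. (x,e) \<in> C}" "v1 \<in> {x. (x,e) \<in> C}" using h True by auto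
      hence "u1 \<in> {u,v}" "v1 \<in> {u,v}" using uv(2) by auto
      hence "{u1,v1} = {u,v}" using h(3) uv(1) by auto
      hence "pp C q u1 + pp C q v1 = pp C q u + pp C q v" using h(3) uv(1)
        by (metis add.commute doubleton_eq_iff)
      then show ?thesis using True c S_def col'_def by simp
    next
      case False
      then show ?thesis using e1 h col col'_def by auto
    qed
  next
    fix e1 w assume e1: "e1 \<in> insert e F" and h: "(w,e1) \<in> C"
    show "col' e1 \<notin> \<Psi> w"
    proof (cases "e1 = e")
      case True
      hence "w = u \<or> w = v" using h uv by auto
      then show ?thesis using True c Fb_def col'_def by auto
    next
      case False
      then show ?thesis using e1 h col col'_def by auto
    qed
  next
    fix e1 e' w assume e1: "e1 \<in> insert e F" and e': "e' \<in> insert e F"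
      and h: "e' \<noteq> e1" "(w,e1) \<in> C" "(w,e') \<in> C"
    show "col' e1 \<noteq> col' e'"
    proof (cases "e1 = e")
      case True
      hence w: "w = u \<or> w = v" using h uv by auto
      have "e' \<in> F" using e' h True by auto
      hence "e' \<in> I2 C w" using rF h by (auto simp: I2_def)
      hence "col e' \<in> Fb" using w \<open>e' \<in> F\<close> Fb_def by auto
      then show ?thesis using True c col'_def h by auto
    next
      case False
      hence e1F: "e1 \<in> F" using e1 by auto
      show ?thesis
      proof (cases "e' = e")
        case True
        hence w: "w = u \<or> w = v" using h uv by auto
        have "e1 \<in> I2 C w" using rF h e1F by (auto simp: I2_def)
        hence "col e1 \<in> Fb" using w e1F Fb_def by auto
        then show ?thesis using True c col'_def h by auto
      next
        case False
        then show ?thesis using e1F e' h col col'_def \<open>e1 \<noteq> e\<close> by auto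
      qed
    qed
  qed
qed

lemma rep_plus: "replicate_mset (m + n) a = replicate_mset m a + replicate_mset n a"
  by (simp add: multiset_eq_iff)

theorem mainTheorem9:
  fixes A :: "'a set" and B :: "'b set" and C :: "('a \<times> 'b) set"
    and hin :: "'a \<Rightarrow> sigma multiset set"
  assumes "semi_graph A B C"
    and "valid_input A B C hin"
  shows "\<exists>hout. valid_solution A B C hin hout"
proof -
  have finA: "finite A" and finB: "finite B" and CAB: "C \<subseteq> A \<times> B"
    and r2: "\<forall>e\<in>B. card {v. (v,e) \<in> C} \<le> 2"
    using assms(1) unfolding semi_graph_def by auto
  have "finite (A \<times> B)" using finA finB by simp
  hence finC: "finite C" by (rule finite_subset[OF CAB])
  define P where "P = (\<lambda>v (j::nat) (xs::(nat\<times>nat) list). length xs \<le> j \<and>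
      hin v = list_constr (node_deg C v) (mset (map (\<lambda>(a,b). Pr a b) xs) + replicate_mset (j - length xs) D) \<and>
      (\<forall>(a,b)\<in>set xs. 0 < a \<and> 0 < b) \<and> (\<forall>(a,b)\<in>set xs. a \<le> length xs) \<and> distinct (map snd xs))"
  have "\<forall>v\<in>A. \<exists>jx. P v (fst jx) (snd jx)"
  proof
    fix v assume "v \<in> A"
    hence "hin v \<in> list_family (node_deg C v)" using assms(2) unfolding valid_input_def by blast
    then obtain \<psi> j where h: "hin v = list_constr (node_deg C v) \<psi>" "\<psi> \<in> node_constr j"
      unfolding list_family_def by blast
    then obtain xs where xs: "length xs \<le> j \<and>
      \<psi> = mset (map (\<lambda>(a,b). Pr a b) xs) + replicate_mset (j - length xs) D \<and>
      (\<forall>(a,b)\<in>set xs. 0 < a \<and> 0 < b) \<and>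
      (\<forall>(a,b)\<in>set xs. a \<le> length xs) \<and>
      distinct (map snd xs)" unfolding node_constr_def by blast
    have "P v j xs" using h(1) xs unfolding P_def by simp
    thus "\<exists>jx. P v (fst jx) (snd jx)" by (metis fst_conv snd_conv)
  qed
  from bchoice[OF this] obtain f where f: "\<forall>v\<in>A. P v (fst (f v)) (snd (f v))" ..
  define X where "X v = snd (f v)" for v
  define J where "J v = fst (f v)" for v
  define q where "q v = length (X v)" for v
  define \<Psi> where "\<Psi> v = set (map snd (X v))" for v
  define \<psi> where "\<psi> v = mset (map (\<lambda>(a,b). Pr a b) (X v)) + replicate_mset (J v - length (X v)) D" for v
  have cP: "card (\<Psi> v) \<le> q v" for v unfolding \<Psi>_def q_def by (metis card_length length_map)
  have fP: "finite (\<Psi> v)" for v unfolding \<Psi>_def by simp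
  define E2 where "E2 = {e\<in>B. edge_rank C e = 2}"
  have "finite E2" using finB E2_def by simp
  moreover have "\<forall>e\<in>E2. edge_rank C e = 2" by (simp add: E2_def)
  ultimately have "\<exists>col. \<forall>e\<in>E2. 1 \<le> col e \<and>
       (\<forall>u v. (u,e) \<in> C \<longrightarrow> (v,e) \<in> C \<longrightarrow> u \<noteq> v \<longrightarrow> col e < pp C q u + pp C q v) \<and>
       (\<forall>w. (w,e) \<in> C \<longrightarrow> col e \<notin> \<Psi> w) \<and>
       (\<forall>e'\<in>E2. \<forall>w. e' \<noteq> e \<longrightarrow> (w,e) \<in> C \<longrightarrow> (w,e') \<in> C \<longrightarrow> col e \<noteq> col e')"
    by (rule greedy[of C \<Psi> q E2, OF finC cP fP])
  then obtain col where col: "\<forall>e\<in>E2. 1 \<le> col e \<and>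
       (\<forall>u v. (u,e) \<in> C \<longrightarrow> (v,e) \<in> C \<longrightarrow> u \<noteq> v \<longrightarrow> col e < pp C q u + pp C q v) \<and>
       (\<forall>w. (w,e) \<in> C \<longrightarrow> col e \<notin> \<Psi> w) \<and>
       (\<forall>e'\<in>E2. \<forall>w. e' \<noteq> e \<longrightarrow> (w,e) \<in> C \<longrightarrow> (w,e') \<in> C \<longrightarrow> col e \<noteq> col e')"
    ..
  define hout where "hout = (\<lambda>(v,e). if edge_rank C e = 2 then Pr (pp C q v) (col e) else D)"
  have ppos: "pp C q v \<ge> 1" if "(v,e) \<in> C" "edge_rank C e = 2" for v e
  proof -
    have "e \<in> I2 C v" using that by (simp add: I2_def)
    hence "card (I2 C v) \<ge> 1" using finite_I2[OF finC]
      by (metis One_nat_def Suc_leI card_gt_0_iff empty_iff)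
    thus ?thesis unfolding pp_def by simp
  qed
  have inE2: "e \<in> E2" if "(v,e) \<in> C" "edge_rank C e = 2" for v e
    using that CAB E2_def by auto
  have S1: "\<forall>c\<in>C. in_Sigma (hout c)"
  proof
    fix c assume "c \<in> C"
    then obtain v e where c: "c = (v,e)" "(v,e) \<in> C" by (cases c) auto
    show "in_Sigma (hout c)"
    proof (cases "edge_rank C e = 2")
      case True
      then show ?thesis using c ppos[OF c(2) True] col inE2[OF c(2) True]
        by (auto simp: hout_def in_Sigma_def)
    qed (auto simp: c hout_def in_Sigma_def)
  qed
  have S3: "\<forall>e\<in>B. edge_labels C hout e \<in> edge_constr (edge_rank C e)"
  proof
    fix e assume eB: "e \<in> B"
    let ?G = "edge_labels C hout e \<in> edge_constr (edge_rank C e)"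
    define V where "V = {v. (v,e) \<in> C}"
    have "V \<subseteq> fst ` C" unfolding V_def by force
    hence finV: "finite V" using finC finite_subset by blast
    have rk: "edge_rank C e = card V" unfolding V_def edge_rank_def by simp
    have "card V \<le> 2" using r2 eB V_def by auto
    hence "card V = 0 \<or> card V = 1 \<or> card V = 2" by linarith
    moreover
    { assume c0: "card V = 0"
      hence "V = {}" using finV by simp
      hence "edge_labels C hout e = {#}" unfolding edge_labels_def V_def[symmetric] by simp
      moreover have "edge_rank C e = 0" using rk c0 by simp
      ultimately have ?G by (simp add: edge_constr_def) }
    moreover
    { assume c1: "card V = 1"
      then obtain u where u: "V = {u}" by (auto simp: card_1_singleton_iff)
      have er: "edge_rank C e = 1" using rk c1 by simp
      have "edge_labels C hout e = {#hout (u,e)#}"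
        unfolding edge_labels_def V_def[symmetric] u by simp
      also have "hout (u,e) = D" using er by (simp add: hout_def)
      finally have ?G using er by (simp add: edge_constr_def) }
    moreover
    { assume c2: "card V = 2"
      then obtain u v where uv: "u \<noteq> v" "V = {u,v}" by (meson card_2_iff)
      have uC: "(u,e) \<in> C" "(v,e) \<in> C" using uv V_def by auto
      have er: "edge_rank C e = 2" using rk c2 by simp
      have E: "e \<in> E2" using inE2[OF uC(1) er] .
      have ce: "1 \<le> col e" "\<forall>u v. (u,e) \<in> C \<longrightarrow> (v,e) \<in> C \<longrightarrow> u \<noteq> v \<longrightarrow> col e < pp C q u + pp C q v"
        using bspec[OF col E] by auto
      have lt: "col e < pp C q u + pp C q v" using ce(2) uC uv(1) by blast
      have "mset_set V = {#u,v#}" using uv by simp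
      hence "edge_labels C hout e = {#hout (u,e), hout (v,e)#}"
        unfolding edge_labels_def V_def[symmetric] by simp
      also have "hout (u,e) = Pr (pp C q u) (col e)" using er by (simp add: hout_def)
      also have "hout (v,e) = Pr (pp C q v) (col e)" using er by (simp add: hout_def)
      finally have el: "edge_labels C hout e = {#Pr (pp C q u) (col e), Pr (pp C q v) (col e)#}" .
      have "0 < pp C q u" "0 < pp C q v" "0 < col e"
        using ppos[OF uC(1) er] ppos[OF uC(2) er] ce(1) by auto
      hence "\<exists>a1 a2 b. edge_labels C hout e = {#Pr a1 b, Pr a2 b#} \<and> 0 < a1 \<and> 0 < a2 \<and> 0 < b \<and> a1 + a2 \<ge> b + 1"
        using el lt by (intro exI[of _ "pp C q u"] exI[of _ "pp C q v"] exI[of _ "col e"]) simp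
      hence ?G using er unfolding edge_constr_def by simp }
    ultimately show "edge_labels C hout e \<in> edge_constr (edge_rank C e)" by blast
  qed
  have S2: "\<forall>v\<in>A. node_labels C hout v \<in> hin v"
  proof
    fix v assume vA: "v \<in> A"
    have Pv: "P v (J v) (X v)" using f vA unfolding J_def X_def by blast
    have lenJ: "length (X v) \<le> J v"
      and hinv: "hin v = list_constr (node_deg C v) (\<psi> v)"
      and posX: "\<forall>(a,b)\<in>set (X v). 0 < a \<and> 0 < b"
      and aleX: "\<forall>(a,b)\<in>set (X v). a \<le> length (X v)"
      and distX: "distinct (map snd (X v))"
      using Pv unfolding P_def \<psi>_def by auto
    define Iv where "Iv = {e. (v,e) \<in> C}"
    have "Iv \<subseteq> snd ` C" unfolding Iv_def by force
    hence finIv: "finite Iv" using finC finite_subset by blast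
    define R where "R = Iv - I2 C v"
    have I2sub: "I2 C v \<subseteq> Iv" unfolding I2_def Iv_def by auto
    have finI2: "finite (I2 C v)" using finite_I2[OF finC] .
    have finR: "finite R" using finIv R_def by simp
    have IvU: "Iv = I2 C v \<union> R" using I2sub R_def by auto
    have disj: "I2 C v \<inter> R = {}" using R_def by auto
    obtain l where l: "set l = I2 C v" "distinct l" using finite_distinct_list[OF finI2] by blast
    have cardl: "card (I2 C v) = length l" using l distinct_card by metis
    define pv where "pv = pp C q v"
    have pvdef: "pv = length (X v) + length l" unfolding pv_def pp_def q_def cardl ..
    have colI: "1 \<le> col e \<and> col e \<notin> \<Psi> v \<and> (\<forall>e'\<in>I2 C v. e' \<noteq> e \<longrightarrow> col e \<noteq> col e')"
      if "e \<in> I2 C v" for e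
    proof -
      have ve: "(v,e) \<in> C" "edge_rank C e = 2" using that unfolding I2_def by auto
      have E: "e \<in> E2" using inE2[OF ve] .
      have ce: "1 \<le> col e" "\<forall>w. (w,e) \<in> C \<longrightarrow> col e \<notin> \<Psi> w"
        "\<forall>e'\<in>E2. \<forall>w. e' \<noteq> e \<longrightarrow> (w,e) \<in> C \<longrightarrow> (w,e') \<in> C \<longrightarrow> col e \<noteq> col e'"
        using bspec[OF col E] by auto
      have "\<forall>e'\<in>I2 C v. e' \<noteq> e \<longrightarrow> col e \<noteq> col e'"
      proof (intro ballI impI)
        fix e' assume e': "e' \<in> I2 C v" "e' \<noteq> e"
        have ve': "(v,e') \<in> C" "edge_rank C e' = 2" using e'(1) unfolding I2_def by auto
        have "e' \<in> E2" using inE2[OF ve'] .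
        thus "col e \<noteq> col e'" using ce(3) e'(2) ve(1) ve'(1) by blast
      qed
      thus ?thesis using ce(1) ce(2) ve(1) by blast
    qed
    define g where "g = (\<lambda>e. hout (v,e))"
    have gI2: "g e = Pr pv (col e)" if "e \<in> I2 C v" for e
      using that unfolding g_def hout_def pv_def I2_def by auto
    have gR: "g e = D" if "e \<in> R" for e
      using that unfolding g_def hout_def R_def I2_def Iv_def by auto
    have NL: "node_labels C hout v = image_mset g (mset_set Iv)"
      unfolding node_labels_def g_def Iv_def ..
    have m1: "mset_set (I2 C v) = mset l" using mset_set_set[OF l(2)] l(1) by simp
    have "mset_set Iv = mset l + mset_set R"
      using IvU mset_set_Union[OF finI2 finR disj] m1 by simp
    hence "image_mset g (mset_set Iv) = image_mset g (mset l) + image_mset g (mset_set R)"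
      by simp
    also have "image_mset g (mset l) = mset (map g l)" by simp
    also have "map g l = map (\<lambda>e. Pr pv (col e)) l"
      by (rule map_cong) (use gI2 l(1) in auto)
    also have "image_mset g (mset_set R) = image_mset (\<lambda>e. D) (mset_set R)"
      by (rule image_mset_cong) (use gR finR in auto)
    also have "\<dots> = replicate_mset (card R) D" by (simp add: image_mset_const_eq)
    finally have chi: "node_labels C hout v = mset (map (\<lambda>e. Pr pv (col e)) l) + replicate_mset (card R) D"
      using NL by simp
    have degv: "node_deg C v = length l + card R"
      unfolding node_deg_def Iv_def[symmetric] IvU using card_Un_disjoint[OF finI2 finR disj] cardl by simp
    have sizepsi: "size (\<psi> v) = J v" unfolding \<psi>_def using lenJ by simp
    define xs' where "xs' = X v @ map (\<lambda>e. (pv, col e)) l"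
    have lenxs': "length xs' = pv" unfolding xs'_def pvdef by simp
    have sum: "node_labels C hout v + \<psi> v = mset (map (\<lambda>(a,b). Pr a b) xs') +
        replicate_mset (node_deg C v + size (\<psi> v) - length xs') D"
    proof -
      have "node_deg C v + size (\<psi> v) - length xs' = card R + (J v - length (X v))"
        using degv sizepsi lenJ unfolding xs'_def by simp
      thus ?thesis unfolding chi \<psi>_def xs'_def
        using rep_plus[of "card R" "J v - length (X v)" D, symmetric] by (simp add: comp_def)
    qed
    have "node_labels C hout v + \<psi> v \<in> node_constr (node_deg C v + size (\<psi> v))"
      unfolding node_constr_def
    proof (intro CollectI exI[of _ xs'] conjI)
      show "length xs' \<le> node_deg C v + size (\<psi> v)"
        using degv sizepsi lenJ unfolding xs'_def by simp
      show "node_labels C hout v + \<psi> v = mset (map (\<lambda>(a,b). Pr a b) xs') +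
        replicate_mset (node_deg C v + size (\<psi> v) - length xs') D" by (rule sum)
      have c1: "1 \<le> col e" and c2: "col e \<notin> \<Psi> v" if "e \<in> set l" for e
        using colI[of e] that l(1) by auto
      have c3: "col e \<noteq> col e'" if "e \<in> set l" "e' \<in> set l" "e' \<noteq> e" for e e'
      proof -
        have "\<forall>e'\<in>I2 C v. e' \<noteq> e \<longrightarrow> col e \<noteq> col e'" using colI[of e] that(1) l(1) by auto
        thus ?thesis using that l(1) by auto
      qed
      have pv0: "0 < pv" if "e \<in> set l" for e using pvdef that by (cases l) auto
      have pos2: "\<forall>e\<in>set l. 0 < pv \<and> 0 < col e" using c1 pv0 by fastforce
      show "\<forall>(a,b)\<in>set xs'. 0 < a \<and> 0 < b"
        unfolding xs'_def using posX pos2 by auto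
      show "\<forall>(a,b)\<in>set xs'. a \<le> length xs'"
        unfolding lenxs' unfolding xs'_def using aleX pvdef by auto
      have injc: "inj_on col (set l)"
      proof (rule inj_onI)
        fix e e' assume "e \<in> set l" "e' \<in> set l" "col e = col e'"
        thus "e = e'" using c3 by blast
      qed
      have disjc: "set (map snd (X v)) \<inter> set (map col l) = {}"
        using c2 unfolding \<Psi>_def by force
      show "distinct (map snd xs')"
        unfolding xs'_def using distX l(2) injc disjc by (simp add: distinct_map comp_def)
    qed
    moreover have "size (node_labels C hout v) = node_deg C v"
      unfolding node_labels_def node_deg_def by simp
    moreover have "mset_over_Sigma (node_labels C hout v)"
      unfolding mset_over_Sigma_def node_labels_def using S1 finIv unfolding Iv_def by auto
    ultimately have "node_labels C hout v \<in> list_constr (node_deg C v) (\<psi> v)"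
      unfolding list_constr_def by blast
    thus "node_labels C hout v \<in> hin v" using hinv by simp
  qed
  show ?thesis using S1 S2 S3 unfolding valid_solution_def by blast
qed

end
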